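(* Let $N\ge3$, $h>0$, and let $D$ be the periodic second-order central difference matrix ($D_{k,k+1}=\tfrac1{2h}$, $D_{k,k-1}=-\tfrac1{2h}$, indices mod $N$, all other entries zero). Let $J(\mathbf u)$ be the Jacobian of $\mathcal R_k(\mathbf u)=-2\sum_jD_{kj}F^\star_{\log}(u_k,u_j)$ with the logarithmic mean $F^\star_{\log}(u,v)=(v-u)/(\log v-\log u)$. Fix an index $i$, constants $\delta_+,\delta_->0$ with $\delta_+\ne\delta_-$, and constants $U_k>0$ for $k\notin\{i-1,i,i+1\}$. For $\varepsilon>0$ define $u^\varepsilon_i=\varepsilon$, $u^\varepsilon_{i\pm1}=\delta_\pm h+\varepsilon$, and $u^\varepsilon_k=U_k+\varepsilon$ otherwise. Then $|\operatorname{tr}(J(\mathbf u^\varepsilon)^2)|\to\infty$ and hence the spectral radius $\rho(J(\mathbf u^\varepsilon))\ge\sqrt{|\operatorname{tr}(J^2)|/N}\to\infty$ as $\varepsilon\to0^+$.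
   Context: The Jacobian is $J_{ik}=-2D_{ik}\partial_2F^\star(u_i,u_k)-2\delta_{ik}\sum_jD_{ij}\partial_1F^\star(u_i,u_j)$; explicitly with $r_j=u_j/u_i$, $J_{ij}=-2D_{ij}\frac{\log r_j-1+1/r_j}{\log^2 r_j}$ for $i\ne j$ and $J_{ii}=-2\sum_{k\ne i}D_{ik}\frac{r_k-\log r_k-1}{\log^2r_k}$. *)

theory Defs
  imports "HOL-Analysis.Derivative" "Jordan_Normal_Form.Spectral_Radius"
begin

definition logmean :: "real \<Rightarrow> real \<Rightarrow> real" where
  "logmean u v = (if u = v then u else (v - u) / (ln v - ln u))"

definition Dmat :: "nat \<Rightarrow> real \<Rightarrow> nat \<Rightarrow> nat \<Rightarrow> real" where
  "Dmat N h k j =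
     (if j = (k + 1) mod N then 1 / (2 * h)
      else if j = (k + N - 1) mod N then - 1 / (2 * h) else 0)"

definition Rres :: "nat \<Rightarrow> real \<Rightarrow> (nat \<Rightarrow> real) \<Rightarrow> nat \<Rightarrow> real" where
  "Rres N h u k = - 2 * (\<Sum>j<N. Dmat N h k j * logmean (u k) (u j))"

definition jac_entry :: "nat \<Rightarrow> real \<Rightarrow> (nat \<Rightarrow> real) \<Rightarrow> nat \<Rightarrow> nat \<Rightarrow> real" where
  "jac_entry N h u k l = deriv (\<lambda>t. Rres N h (u(l := t)) k) (u l)"

definition jac :: "nat \<Rightarrow> real \<Rightarrow> (nat \<Rightarrow> real) \<Rightarrow> real mat" where
  "jac N h u = mat N N (\<lambda>(k, l). jac_entry N h u k l)"

definition ueps :: "nat \<Rightarrow> nat \<Rightarrow> real \<Rightarrow> real \<Rightarrow> real \<Rightarrow> (nat \<Rightarrow> real) \<Rightarrow> real \<Rightarrow> nat \<Rightarrow> real" where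
  "ueps N i h dp dm U \<epsilon> k =
     (if k = i then \<epsilon>
      else if k = (i + 1) mod N then dp * h + \<epsilon>
      else if k = (i + N - 1) mod N then dm * h + \<epsilon>
      else U k + \<epsilon>)"


definition mat_trace :: "'a::comm_monoid_add mat \<Rightarrow> 'a" where
  "mat_trace A = (\<Sum>k<dim_row A. A $$ (k, k))"

end

theory Submission
  imports Defs "HOL-Real_Asymp.Real_Asymp"
begin


definition phi :: "real \<Rightarrow> real" where
  "phi r = (if r = 1 then 1 else (r - 1) / ln r)"
definition G1 :: "real \<Rightarrow> real" where
  "G1 r = (if r = 1 then 1/2 else (r - 1 - ln r) / (ln r)^2)"
definition G2 :: "real \<Rightarrow> real" where
  "G2 r = (if r = 1 then 1/2 else (ln r - 1 + 1/r) / (ln r)^2)"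

lemma ln_ne0: "r > 0 \<Longrightarrow> r \<noteq> 1 \<Longrightarrow> ln r \<noteq> (0::real)"
  by simp

lemma logmean_phi: assumes "a > 0" "t > 0" shows "logmean a t = a * phi (t / a)"
proof (cases "t = a")
  case True thus ?thesis using assms by (simp add: logmean_def phi_def)
next
  case False
  hence ne: "t / a \<noteq> 1" using assms by simp
  have eq: "ln (t/a) = ln t - ln a" using assms by (simp add: ln_div)
  have "a * phi (t/a) = a * ((t/a - 1)/(ln t - ln a))" using ne by (simp add: phi_def eq)
  also have "\<dots> = (t-a)/(ln t - ln a)" using assms by (simp add: divide_simps)
  finally show ?thesis using False by (simp add: logmean_def)
qed

lemma phi_deriv: assumes "s > 0" shows "(phi has_real_derivative G2 s) (at s)"
proof (cases "s = 1")
  case False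
  have d: "((\<lambda>x. (x - 1) / ln x) has_real_derivative G2 s) (at s)"
  proof -
    have "((\<lambda>x. (x - 1) / ln x) has_real_derivative ((1 * ln s - (s - 1) * (1/s)) / (ln s * ln s))) (at s)"
      using assms False by (auto intro!: derivative_eq_intros)
    moreover have "(1 * ln s - (s - 1) * (1/s)) / (ln s * ln s) = G2 s"
      using assms False by (simp add: G2_def field_simps power2_eq_square)
    ultimately show ?thesis by simp
  qed
  show ?thesis
    by (rule has_field_derivative_transform_within_open[OF d, of "{0<..} - {1}"])
       (use assms False in \<open>auto simp: phi_def\<close>)
next
  case True
  have lim: "((\<lambda>y::real. ((y - 1) / ln y - 1) / (y - 1)) \<longlongrightarrow> (1/2::real)) (at 1)"
    by real_asymp
  have ev: "eventually (\<lambda>y. ((y - 1) / ln y - 1) / (y - 1) = (phi y - phi 1) / (y - 1)) (at (1::real))"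
    by (auto simp: phi_def eventually_at_filter)
  have "((\<lambda>y. (phi y - phi 1) / (y - 1)) \<longlongrightarrow> 1/2) (at 1)"
    using Lim_transform_eventually[OF lim ev] .
  thus ?thesis using True by (simp add: has_field_derivative_iff G2_def)
qed

lemma G_identity: assumes "r > 0" shows "phi r - r * G2 r = G1 r"
proof (cases "r = 1")
  case True thus ?thesis by (simp add: phi_def G1_def G2_def)
next
  case False
  hence "ln r \<noteq> 0" using assms by simp
  thus ?thesis using False assms by (simp add: phi_def G1_def G2_def field_simps power2_eq_square)
qed

lemma logmean_deriv2: assumes "a > 0" "t > 0"
  shows "((\<lambda>x. logmean a x) has_real_derivative G2 (t / a)) (at t)"
proof -
  have "((\<lambda>x. a * phi (x / a)) has_real_derivative a * (G2 (t/a) * (1 / a))) (at t)"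
    using assms by (auto intro!: derivative_eq_intros DERIV_chain2[OF phi_deriv])
  hence d: "((\<lambda>x. a * phi (x / a)) has_real_derivative G2 (t/a)) (at t)" using assms by simp
  show ?thesis
    by (rule has_field_derivative_transform_within_open[OF d, of "{0<..}"])
       (use assms in \<open>auto simp: logmean_phi\<close>)
qed

lemma logmean_deriv1: assumes "b > 0" "t > 0"
  shows "((\<lambda>x. logmean x b) has_real_derivative G1 (b / t)) (at t)"
proof -
  have "((\<lambda>x. x * phi (b / x)) has_real_derivative 1 * phi (b/t) + t * (G2 (b/t) * (- b / t^2))) (at t)"
    using assms by (auto intro!: derivative_eq_intros DERIV_chain2[OF phi_deriv] simp: power2_eq_square)
  moreover have "1 * phi (b/t) + t * (G2 (b/t) * (- b / t^2)) = phi (b/t) - (b/t) * G2 (b/t)"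
    using assms by (simp add: field_simps power2_eq_square)
  ultimately have d: "((\<lambda>x. x * phi (b / x)) has_real_derivative G1 (b/t)) (at t)"
    using G_identity[of "b/t"] assms by simp
  show ?thesis
    by (rule has_field_derivative_transform_within_open[OF d, of "{0<..}"])
       (use assms in \<open>auto simp: logmean_phi\<close>)
qed

lemma G_bounds: assumes "r > 0"
  shows "0 \<le> G1 r" "0 \<le> G2 r" "G1 r + r * G2 r = phi r" "phi r \<le> max 1 r"
proof -
  have l1: "ln r \<le> r - 1" using assms by (rule ln_le_minus_one)
  have l2: "1 - 1/r \<le> ln r"
  proof -
    have "ln (1/r) \<le> 1/r - 1" using assms by (intro ln_le_minus_one) simp
    thus ?thesis using assms by (simp add: ln_div)
  qed
  show "0 \<le> G1 r" using l1 by (simp add: G1_def)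
  show "0 \<le> G2 r" using l2 by (simp add: G2_def)
  show "G1 r + r * G2 r = phi r" using G_identity[OF assms] by simp
  show "phi r \<le> max 1 r"
  proof (cases "r = 1")
    case True thus ?thesis by (simp add: phi_def)
  next
    case False
    show ?thesis
    proof (cases "r > 1")
      case True
      hence lp: "ln r > 0" by simp
      have "r - 1 \<le> r * ln r" using l2 assms by (simp add: field_simps)
      hence "(r - 1) / ln r \<le> r" using lp by (simp add: divide_le_eq)
      thus ?thesis using False by (simp add: phi_def)
    next
      case False2: False
      hence "r < 1" using False by simp
      hence lp: "ln r < 0" using assms by simp
      have "(r - 1) / ln r \<le> 1" using lp l1 by (simp add: divide_le_eq)
      thus ?thesis using False by (simp add: phi_def)
    qed
  qed
qed

lemma G1_le: "r > 0 \<Longrightarrow> G1 r \<le> max 1 r"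
  using G_bounds[of r] by (smt (verit) mult_nonneg_nonneg)

lemma G2_le: assumes "r > 0" shows "G2 r \<le> max 1 (1 / r)"
proof -
  have "r * G2 r \<le> max 1 r" using G_bounds[OF assms] by linarith
  hence "G2 r \<le> max 1 r / r" using assms by (simp add: le_divide_eq mult.commute)
  also have "max 1 r / r = max (1/r) 1" using assms by (auto simp: max_def)
  finally show ?thesis by simp
qed


lemma mod_facts: fixes N k :: nat assumes "N \<ge> 3" "k < N"
  shows "(k + 1) mod N \<noteq> k" "(k + N - 1) mod N \<noteq> k" "(k + 1) mod N \<noteq> (k + N - 1) mod N"
    "(k + 1) mod N < N" "(k + N - 1) mod N < N"
proof -
  have m1: "(k + N - 1) mod N = (if k = 0 then N - 1 else k - 1)"
  proof (cases "k = 0")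
    case True thus ?thesis using assms by simp
  next
    case False
    hence e: "k + N - 1 = (k - 1) + N" by simp
    have "((k - 1) + N) mod N = k - 1" using assms by (simp only: mod_add_self2) simp
    thus ?thesis using False by (simp only: e) simp
  qed
  have m2: "(k + 1) mod N = (if k + 1 = N then 0 else k + 1)"
    using assms by auto
  show "(k + 1) mod N \<noteq> k" unfolding m2 using assms by auto
  show "(k + N - 1) mod N \<noteq> k" unfolding m1 using assms by auto
  show "(k + 1) mod N \<noteq> (k + N - 1) mod N"
    unfolding m1 m2 using assms by auto
  show "(k + 1) mod N < N" "(k + N - 1) mod N < N" using assms by auto
qed


lemma Dmat_diag: "N \<ge> 3 \<Longrightarrow> k < N \<Longrightarrow> Dmat N h k k = 0"
  using mod_facts[of N k] by (simp add: Dmat_def)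

lemma Dmat_abs: "h > 0 \<Longrightarrow> \<bar>Dmat N h k j\<bar> \<le> 1 / (2 * h)"
  by (simp add: Dmat_def)

lemma Dmat_sum: fixes N k :: nat assumes "N \<ge> 3" "k < N"
  shows "(\<Sum>j<N. Dmat N h k j * f j) = (f ((k + 1) mod N) - f ((k + N - 1) mod N)) / (2 * h)"
proof -
  let ?a = "(k + 1) mod N" and ?b = "(k + N - 1) mod N"
  have ab: "?a \<noteq> ?b" "?a < N" "?b < N" using mod_facts[OF assms] by auto
  have "(\<Sum>j<N. Dmat N h k j * f j) = (\<Sum>j<N. (if j = ?a then f j / (2*h) else 0) + (if j = ?b then - f j / (2*h) else 0))"
    by (rule sum.cong) (use ab in \<open>auto simp: Dmat_def\<close>)
  also have "\<dots> = f ?a / (2*h) - f ?b / (2*h)"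
    using ab by (simp add: sum.distrib)
  finally show ?thesis by (simp only: diff_divide_distrib)
qed

lemma jac_entry_formula:
  assumes N: "N \<ge> 3" and pos: "\<And>j. j < N \<Longrightarrow> u j > 0" and k: "k < N" and l: "l < N"
  shows "jac_entry N h u k l = (if k = l then -2 * (\<Sum>j<N. Dmat N h k j * G1 (u j / u k))
                                else -2 * Dmat N h k l * G2 (u l / u k))"
proof (cases "k = l")
  case True
  have fe: "(\<lambda>t. Rres N h (u(l := t)) k) = (\<lambda>t. -2 * (\<Sum>j<N. Dmat N h k j * logmean t (u j)))"
  proof
    fix t
    show "Rres N h (u(l := t)) k = -2 * (\<Sum>j<N. Dmat N h k j * logmean t (u j))"
      unfolding Rres_def using True Dmat_diag[OF N k] by (intro arg_cong[where f="\<lambda>x. -2 * x"] sum.cong) auto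
  qed
  have "((\<lambda>t. -2 * (\<Sum>j<N. Dmat N h k j * logmean t (u j))) has_real_derivative
          -2 * (\<Sum>j<N. Dmat N h k j * G1 (u j / u k))) (at (u l))"
    using True pos k by (auto intro!: derivative_intros DERIV_cmult logmean_deriv1)
  thus ?thesis unfolding jac_entry_def fe using True by (simp add: DERIV_imp_deriv)
next
  case False
  have fe: "(\<lambda>t. Rres N h (u(l := t)) k) = (\<lambda>t. -2 * (\<Sum>j<N. Dmat N h k j * logmean (u k) ((u(l := t)) j)))"
    unfolding Rres_def using False by simp
  have "((\<lambda>t. -2 * (\<Sum>j<N. Dmat N h k j * logmean (u k) ((u(l := t)) j))) has_real_derivative
          -2 * (\<Sum>j<N. if j = l then Dmat N h k l * G2 (u l / u k) else 0)) (at (u l))"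
  proof (intro DERIV_cmult DERIV_sum)
    fix j assume "j \<in> {..<N}"
    show "((\<lambda>t. Dmat N h k j * logmean (u k) ((u(l := t)) j)) has_real_derivative
            (if j = l then Dmat N h k l * G2 (u l / u k) else 0)) (at (u l))"
    proof (cases "j = l")
      case True
      thus ?thesis using pos k l by (auto intro!: DERIV_cmult logmean_deriv2)
    next
      case False
      thus ?thesis by simp
    qed
  qed
  moreover have "(\<Sum>j<N. if j = l then Dmat N h k l * G2 (u l / u k) else 0) = Dmat N h k l * G2 (u l / u k)"
    using l by simp
  ultimately show ?thesis unfolding jac_entry_def fe using False by (simp add: DERIV_imp_deriv)
qed



lemma mat_trace_comm: fixes X Y :: "'a::comm_ring mat"
  assumes "X \<in> carrier_mat n m" "Y \<in> carrier_mat m n"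
  shows "mat_trace (X * Y) = mat_trace (Y * X)"
proof -
  have "mat_trace (X * Y) = (\<Sum>k<n. \<Sum>j<m. X $$ (k, j) * Y $$ (j, k))"
    using assms unfolding mat_trace_def
    by (intro sum.cong) (auto simp: scalar_prod_def atLeast0LessThan)
  also have "\<dots> = (\<Sum>j<m. \<Sum>k<n. Y $$ (j, k) * X $$ (k, j))"
    by (subst sum.swap) (simp add: mult.commute)
  also have "\<dots> = mat_trace (Y * X)"
    using assms unfolding mat_trace_def
    by (intro sum.cong) (auto simp: scalar_prod_def atLeast0LessThan)
  finally show ?thesis .
qed

lemma sr_trace: fixes A :: "complex mat" assumes A: "A \<in> carrier_mat n n" and n: "n > 0"
  shows "cmod (mat_trace (A * A)) \<le> real n * (spectral_radius A)^2"
proof -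
  obtain es where cp: "char_poly A = (\<Prod>a\<leftarrow>es. [:- a, 1:])" and len: "length es = n"
    using char_poly_factorized[OF A] by auto
  obtain B P Q where s: "schur_decomposition A es = (B,P,Q)" by (cases "schur_decomposition A es") auto
  from schur_decomposition[OF A cp s] have sim: "similar_mat_wit A B P Q"
    and ut: "upper_triangular B" and dg: "diag_mat B = es" by auto
  note w = similar_mat_witD2[OF A sim]
  have Bc: "B \<in> carrier_mat n n" and Pc: "P \<in> carrier_mat n n" and Qc: "Q \<in> carrier_mat n n"
    using w by auto
  have "A * A = P * B * Q * (P * B * Q)" using w by simp
  also have "\<dots> = P * (B * (Q * P) * B) * Q"
    using Bc Pc Qc by (simp add: assoc_mult_mat[of _ n n _ n _ n])
  also have "\<dots> = P * ((B * B) * Q)" using w Bc Pc Qc by (simp add: assoc_mult_mat[of _ n n _ n _ n])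
  finally have AA: "A * A = P * ((B * B) * Q)" .
  have "mat_trace (A * A) = mat_trace ((B * B) * Q * P)"
    unfolding AA using Bc Pc Qc by (subst mat_trace_comm[of _ n n]) auto
  also have "(B * B) * Q * P = B * B" using w Bc Pc Qc by (simp add: assoc_mult_mat[of _ n n _ n _ n])
  finally have tr: "mat_trace (A * A) = mat_trace (B * B)" .
  have diagB: "\<And>k. k < n \<Longrightarrow> B $$ (k, k) = es ! k"
    using dg Bc unfolding diag_mat_def by auto
  have "mat_trace (B * B) = (\<Sum>k<n. \<Sum>j<n. B $$ (k, j) * B $$ (j, k))"
    using Bc unfolding mat_trace_def
    by (intro sum.cong) (auto simp: scalar_prod_def atLeast0LessThan)
  also have "\<dots> = (\<Sum>k<n. B $$ (k, k) * B $$ (k, k))"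
  proof (rule sum.cong[OF refl])
    fix k assume k: "k \<in> {..<n}"
    have "(\<Sum>j<n. B $$ (k, j) * B $$ (j, k)) = (\<Sum>j<n. if j = k then B $$ (k, k) * B $$ (k, k) else 0)"
    proof (rule sum.cong[OF refl])
      fix j assume j: "j \<in> {..<n}"
      show "B $$ (k, j) * B $$ (j, k) = (if j = k then B $$ (k, k) * B $$ (k, k) else 0)"
        using ut Bc j k unfolding upper_triangular_def
        by (cases "j < k"; cases "k < j") auto
    qed
    also have "\<dots> = B $$ (k, k) * B $$ (k, k)" using k by simp
    finally show "(\<Sum>j<n. B $$ (k, j) * B $$ (j, k)) = B $$ (k, k) * B $$ (k, k)" .
  qed
  finally have tr2: "mat_trace (A * A) = (\<Sum>k<n. es ! k * es ! k)" using tr diagB by simp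
  have ev: "cmod (es ! k) \<le> spectral_radius A" if k: "k < n" for k
  proof -
    have "es ! k \<in> set es" using k len by simp
    hence "poly (char_poly A) (es ! k) = 0" unfolding cp
      by (induction es) (auto simp: poly_prod_list)
    hence "es ! k \<in> spectrum A" using spectrum_root_char_poly[OF A] by auto
    thus ?thesis using spectral_radius_mem_max(2)[OF A n] by auto
  qed
  have "cmod (mat_trace (A * A)) \<le> (\<Sum>k<n. cmod (es ! k * es ! k))"
    unfolding tr2 by (rule norm_sum)
  also have "\<dots> \<le> (\<Sum>k<n. (spectral_radius A)^2)"
  proof (rule sum_mono)
    fix k assume "k \<in> {..<n}"
    hence "cmod (es ! k) \<le> spectral_radius A" using ev by auto
    thus "cmod (es ! k * es ! k) \<le> (spectral_radius A)^2"
      by (simp add: norm_mult power2_eq_square mult_mono')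
  qed
  also have "\<dots> = real n * (spectral_radius A)^2" by simp
  finally show ?thesis .
qed



lemma key_limit_raw:
  fixes a b C :: real assumes "a > b" "b > 0" "C \<ge> 0"
  shows "filterlim (\<lambda>e. ((((a+e)/e) - 1 - ln ((a+e)/e))/(ln ((a+e)/e))^2 - (((b+e)/e) - 1 - ln ((b+e)/e))/(ln ((b+e)/e))^2)^2 - C/e) at_top (at_right 0)"
  using assms by real_asymp

lemma key_limit_gt:
  fixes a b C :: real assumes "a > b" "b > 0" "C \<ge> 0"
  shows "filterlim (\<lambda>e. (G1 ((a+e)/e) - G1 ((b+e)/e))^2 - C/e) at_top (at_right 0)"
proof -
  have "eventually (\<lambda>e. ((((a+e)/e) - 1 - ln ((a+e)/e))/(ln ((a+e)/e))^2 - (((b+e)/e) - 1 - ln ((b+e)/e))/(ln ((b+e)/e))^2)^2 - C/e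
      = (G1 ((a+e)/e) - G1 ((b+e)/e))^2 - C/e) (at_right (0::real))"
    using eventually_at_right_less[of "0::real"]
  proof eventually_elim
    case (elim e)
    have n1: "(a+e)/e \<noteq> 1" and n2: "(b+e)/e \<noteq> 1" using elim assms by (auto simp: field_simps)
    show ?case unfolding G1_def if_not_P[OF n1] if_not_P[OF n2] ..
  qed
  from filterlim_cong[OF refl refl this] key_limit_raw[OF assms] show ?thesis by simp
qed

lemma key_limit:
  fixes a b C :: real assumes "a > 0" "b > 0" "a \<noteq> b" "C \<ge> 0"
  shows "filterlim (\<lambda>e. (G1 ((a+e)/e) - G1 ((b+e)/e))^2 - C/e) at_top (at_right 0)"
proof (cases "a > b")
  case True thus ?thesis using key_limit_gt assms by simp
next
  case False
  hence "b > a" using assms by simp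
  from key_limit_gt[OF this assms(1) assms(4)] show ?thesis
    by (simp add: power2_commute)
qed

lemma trace_jac: "mat_trace (jac N h u * jac N h u) = (\<Sum>k<N. \<Sum>l<N. jac_entry N h u k l * jac_entry N h u l k)"
  unfolding mat_trace_def jac_def
  by (intro sum.cong) (auto simp: scalar_prod_def atLeast0LessThan)

lemma entry_bound_off:
  assumes N: "N \<ge> 3" and h: "h > 0" and pos: "\<And>j. j < N \<Longrightarrow> u j > 0" and k: "k < N" and l: "l < N" and kl: "k \<noteq> l"
  shows "\<bar>jac_entry N h u k l\<bar> \<le> (1/h) * max 1 (u k / u l)"
proof -
  have g: "0 \<le> G2 (u l / u k)" "G2 (u l / u k) \<le> max 1 (1 / (u l / u k))"
    using G_bounds(2)[of "u l / u k"] G2_le[of "u l / u k"] pos k l by auto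
  have "\<bar>jac_entry N h u k l\<bar> = 2 * \<bar>Dmat N h k l\<bar> * G2 (u l / u k)"
    using jac_entry_formula[OF N pos k l] kl g by (simp add: abs_mult)
  also have "\<dots> \<le> 2 * (1 / (2*h)) * max 1 (u k / u l)"
    using Dmat_abs[OF h, of N k l] g h by (intro mult_mono) auto
  finally show ?thesis by simp
qed

lemma entry_bound_diag:
  assumes N: "N \<ge> 3" and h: "h > 0" and pos: "\<And>j. j < N \<Longrightarrow> u j > 0" and k: "k < N"
  shows "\<bar>jac_entry N h u k k\<bar> \<le> (\<Sum>j<N. (1/h) * max 1 (u j / u k))"
proof -
  have "\<bar>jac_entry N h u k k\<bar> = 2 * \<bar>\<Sum>j<N. Dmat N h k j * G1 (u j / u k)\<bar>"
    using jac_entry_formula[OF N pos k k] by simp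
  also have "\<dots> \<le> 2 * (\<Sum>j<N. \<bar>Dmat N h k j * G1 (u j / u k)\<bar>)"
    by (intro mult_left_mono sum_abs) auto
  also have "\<dots> = (\<Sum>j<N. 2 * \<bar>Dmat N h k j * G1 (u j / u k)\<bar>)" by (simp add: sum_distrib_left)
  also have "\<dots> \<le> (\<Sum>j<N. (1/h) * max 1 (u j / u k))"
  proof (rule sum_mono)
    fix j assume "j \<in> {..<N}"
    hence g: "0 \<le> G1 (u j / u k)" "G1 (u j / u k) \<le> max 1 (u j / u k)"
      using G_bounds(1)[of "u j / u k"] G1_le[of "u j / u k"] pos k by auto
    have "2 * \<bar>Dmat N h k j * G1 (u j / u k)\<bar> = 2 * \<bar>Dmat N h k j\<bar> * G1 (u j / u k)"
      using g by (simp add: abs_mult)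
    also have "\<dots> \<le> 2 * (1 / (2*h)) * max 1 (u j / u k)"
      using Dmat_abs[OF h, of N k j] g h by (intro mult_mono) auto
    finally show "2 * \<bar>Dmat N h k j * G1 (u j / u k)\<bar> \<le> (1/h) * max 1 (u j / u k)" by simp
  qed
  finally show ?thesis .
qed



theorem mainTheorem12:
  fixes N i :: nat and h dp dm :: real and U :: "nat \<Rightarrow> real"
  assumes "N \<ge> 3" and "h > 0" and "i < N"
    and "dp > 0" and "dm > 0" and "dp \<noteq> dm"
    and "\<And>k. k < N \<Longrightarrow> k \<noteq> i \<Longrightarrow> k \<noteq> (i + 1) mod N \<Longrightarrow> k \<noteq> (i + N - 1) mod N \<Longrightarrow> U k > 0"
  shows "filterlim (\<lambda>\<epsilon>. \<bar>mat_trace (jac N h (ueps N i h dp dm U \<epsilon>) * jac N h (ueps N i h dp dm U \<epsilon>))\<bar>)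
           at_top (at_right 0)
     \<and> (\<forall>\<epsilon>>0. spectral_radius (map_mat complex_of_real (jac N h (ueps N i h dp dm U \<epsilon>)))
              \<ge> sqrt (\<bar>mat_trace (jac N h (ueps N i h dp dm U \<epsilon>) * jac N h (ueps N i h dp dm U \<epsilon>))\<bar> / real N))
     \<and> filterlim (\<lambda>\<epsilon>. spectral_radius (map_mat complex_of_real (jac N h (ueps N i h dp dm U \<epsilon>))))
           at_top (at_right 0)"
proof -
  note N = assms(1) and h = assms(2) and iN = assms(3)
  let ?u = "ueps N i h dp dm U"
  define b where "b k = ueps N i h dp dm U 0 k" for k
  have ushift: "?u e k = b k + e" for e k by (simp add: b_def ueps_def)
  have bi: "b i = 0" by (simp add: b_def ueps_def)
  have mf: "(i + 1) mod N \<noteq> i" "(i + N - 1) mod N \<noteq> i" "(i + 1) mod N \<noteq> (i + N - 1) mod N"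
    "(i + 1) mod N < N" "(i + N - 1) mod N < N" using mod_facts[OF N iN] by auto
  have bpos: "b k > 0" if "k < N" "k \<noteq> i" for k
    using that assms(2,4,5) assms(7)[of k] by (auto simp: b_def ueps_def)
  have bnn: "b k \<ge> 0" if "k < N" for k using bpos[of k] bi that by (cases "k = i") auto
  define Mx where "Mx = (\<Sum>k<N. b k)"
  have bMx: "b k \<le> Mx" if "k < N" for k
    unfolding Mx_def using that bnn by (intro member_le_sum) auto
  define S where "S = {..<N} - {i}"
  have Sfin: "finite S" and Sne: "S \<noteq> {}" using mf by (auto simp: S_def)
  define m0 where "m0 = Min (b ` S)"
  have m0pos: "m0 > 0" unfolding m0_def using Sfin Sne bpos by (auto simp: S_def)
  have m0le: "m0 \<le> b k" if "k < N" "k \<noteq> i" for k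
    unfolding m0_def using Sfin that by (intro Min_le) (auto simp: S_def)
  have m0Mx: "m0 \<le> Mx" using m0le[OF mf(4) mf(1)] bMx[OF mf(4)] by simp
  define R where "R = (Mx + 1) / m0"
  have R1: "1 \<le> R" unfolding R_def using m0pos m0Mx by simp
  define NB where "NB = real N * (1/h) * R"
  have NBnn: "NB \<ge> 0" unfolding NB_def using R1 h by simp
  define K where "K = NB^2 + NB * (Mx + 1) / h"
  have Mxnn: "Mx \<ge> 0" using bMx[OF iN] bi by simp
  have Knn: "K \<ge> 0" unfolding K_def using NBnn Mxnn h by simp
  define E where "E e k l = jac_entry N h (?u e) k l" for e k l
  have upos: "?u e k > 0" if "e > 0" "k < N" for e k
    using that bnn[of k] by (simp add: ushift)
  have uup: "?u e k \<le> Mx + 1" if "e \<le> 1" "k < N" for e k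
    using that bMx[of k] by (simp add: ushift)
  have ulow: "?u e k \<ge> m0" if "e > 0" "k < N" "k \<noteq> i" for e k
    using that m0le[of k] by (simp add: ushift)
  have ratio: "max 1 (?u e k / ?u e l) \<le> R" if "0 < e" "e \<le> 1" "k < N" "l < N" "l \<noteq> i" for e k l
  proof -
    have "?u e k / ?u e l \<le> (Mx + 1) / m0"
      using uup[of e k] ulow[of e l] upos[of e k] m0pos that by (intro frac_le) auto
    thus ?thesis using R1 unfolding R_def by simp
  qed
  have bA: "\<bar>E e k l\<bar> \<le> NB" if e: "0 < e" "e \<le> 1" and kl: "k < N" "l < N" "l \<noteq> i" for e k l
  proof (cases "k = l")
    case True
    have "\<bar>E e k l\<bar> \<le> (\<Sum>j<N. (1/h) * max 1 (?u e j / ?u e l))"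
      unfolding E_def True using entry_bound_diag[OF N h upos[OF e(1)] kl(2)] by simp
    also have "\<dots> \<le> (\<Sum>j<N. (1/h) * R)"
      using ratio[OF e _ kl(2,3)] h by (intro sum_mono mult_left_mono) auto
    also have "\<dots> = NB" unfolding NB_def by simp
    finally show ?thesis .
  next
    case False
    have "\<bar>E e k l\<bar> \<le> (1/h) * max 1 (?u e k / ?u e l)"
      unfolding E_def using entry_bound_off[OF N h upos[OF e(1)] kl(1,2) False] by simp
    also have "\<dots> \<le> (1/h) * R" using ratio[OF e kl] h by (intro mult_left_mono) auto
    also have "\<dots> \<le> NB"
    proof -
      have "0 \<le> (1/h) * R" using h R1 by simp
      moreover have "1 \<le> real N" using N by simp
      ultimately have "1 * ((1/h) * R) \<le> real N * ((1/h) * R)" by (intro mult_right_mono)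
      thus ?thesis unfolding NB_def by (simp add: mult.assoc)
    qed
    finally show ?thesis .
  qed
  have bB: "\<bar>E e k i\<bar> \<le> (Mx + 1) / (h * e)" if e: "0 < e" "e \<le> 1" and k: "k < N" "k \<noteq> i" for e k
  proof -
    have "\<bar>E e k i\<bar> \<le> (1/h) * max 1 (?u e k / ?u e i)"
      unfolding E_def using entry_bound_off[OF N h upos[OF e(1)] k(1) iN k(2)] by simp
    also have "?u e i = e" by (simp add: ueps_def)
    also have "max 1 (?u e k / e) \<le> (Mx + 1) / e"
    proof -
      have "?u e k / e \<le> (Mx + 1) / e" using uup[OF e(2) k(1)] e by (simp add: divide_right_mono)
      moreover have "1 \<le> (Mx + 1) / e" using e Mxnn by simp
      ultimately show ?thesis by simp
    qed
    hence "(1/h) * max 1 (?u e k / e) \<le> (1/h) * ((Mx + 1) / e)" using h by (intro mult_left_mono) auto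
    finally show ?thesis by simp
  qed
  have bP: "\<bar>E e k l * E e l k\<bar> \<le> K / e" if e: "0 < e" "e \<le> 1" and kl: "k < N" "l < N" "\<not> (k = i \<and> l = i)" for e k l
  proof -
    have NBe: "NB * NB \<le> K / e"
    proof -
      have "NB * NB \<le> K" unfolding K_def using NBnn Mxnn h by (simp add: power2_eq_square)
      also have "K \<le> K / e" using Knn e by (simp add: le_divide_eq mult_left_le)
      finally show ?thesis .
    qed
    have mixed: "\<bar>E e i l * E e l i\<bar> \<le> K / e" if l: "l < N" "l \<noteq> i" for l
    proof -
      have "\<bar>E e i l * E e l i\<bar> = \<bar>E e i l\<bar> * \<bar>E e l i\<bar>" by (simp add: abs_mult)
      also have "\<dots> \<le> NB * ((Mx + 1) / (h * e))"
        using bA[OF e iN l] bB[OF e l] NBnn by (intro mult_mono) auto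
      also have "\<dots> = (NB * (Mx + 1) / h) / e" by (simp add: field_simps)
      also have "\<dots> \<le> K / e" unfolding K_def using e NBnn
        by (intro divide_right_mono) auto
      finally show ?thesis .
    qed
    show ?thesis
    proof (cases "k = i")
      case True
      hence "l \<noteq> i" using kl by simp
      thus ?thesis using mixed[OF kl(2)] True by simp
    next
      case ki: False
      show ?thesis
      proof (cases "l = i")
        case True
        thus ?thesis using mixed[OF kl(1) ki] by (simp add: mult.commute)
      next
        case False
        have "\<bar>E e k l * E e l k\<bar> = \<bar>E e k l\<bar> * \<bar>E e l k\<bar>" by (simp add: abs_mult)
        also have "\<dots> \<le> NB * NB" using bA[OF e kl(1,2) False] bA[OF e kl(2,1) ki] NBnn
          by (intro mult_mono) auto
        finally show ?thesis using NBe by simp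
      qed
    qed
  qed
  have Eii: "E e i i = - (G1 ((dp * h + e) / e) - G1 ((dm * h + e) / e)) / h" if e: "e > 0" for e
  proof -
    have "E e i i = -2 * (\<Sum>j<N. Dmat N h i j * G1 (?u e j / ?u e i))"
      unfolding E_def using jac_entry_formula[OF N upos[OF e] iN iN] by simp
    also have "\<dots> = -2 * ((G1 (?u e ((i + 1) mod N) / ?u e i) - G1 (?u e ((i + N - 1) mod N) / ?u e i)) / (2 * h))"
      by (subst Dmat_sum[OF N iN]) simp
    also have "?u e ((i + 1) mod N) = dp * h + e" using mf by (simp add: ueps_def)
    also have "?u e ((i + N - 1) mod N) = dm * h + e" using mf by (simp add: ueps_def)
    also have "?u e i = e" by (simp add: ueps_def)
    finally show ?thesis using h by (simp add: field_simps)
  qed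
  define T where "T e = mat_trace (jac N h (?u e) * jac N h (?u e))" for e
  have Tsum: "T e = (\<Sum>k<N. \<Sum>l<N. E e k l * E e l k)" for e
    unfolding T_def E_def by (rule trace_jac)
  have Tdec: "T e = (E e i i)^2 + (\<Sum>k<N. \<Sum>l<N. if k = i \<and> l = i then 0 else E e k l * E e l k)" for e
  proof -
    have "T e = (\<Sum>k<N. \<Sum>l<N. (if k = i \<and> l = i then 0 else E e k l * E e l k) + (if k = i then (if l = i then (E e i i)^2 else 0) else 0))"
      unfolding Tsum by (intro sum.cong refl) (auto simp: power2_eq_square)
    also have "\<dots> = (\<Sum>k<N. \<Sum>l<N. if k = i \<and> l = i then 0 else E e k l * E e l k) + (E e i i)^2"
    proof -
      have "(\<Sum>k<N. \<Sum>l<N. if k = i then if l = i then (E e i i)^2 else 0 else 0) = (\<Sum>k<N. if k = i then (E e i i)^2 else 0)"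
        by (rule sum.cong) (use iN in auto)
      also have "\<dots> = (E e i i)^2" using iN by simp
      finally have c: "(\<Sum>k<N. \<Sum>l<N. if k = i then if l = i then (E e i i)^2 else 0 else 0) = (E e i i)^2" .
      show ?thesis by (simp only: sum.distrib c)
    qed
    finally show ?thesis by simp
  qed
  have Tlow: "T e \<ge> (E e i i)^2 - real N * real N * K / e" if e: "0 < e" "e \<le> 1" for e
  proof -
    have "\<bar>\<Sum>k<N. \<Sum>l<N. if k = i \<and> l = i then 0 else E e k l * E e l k\<bar>
        \<le> (\<Sum>k<N. \<bar>\<Sum>l<N. if k = i \<and> l = i then 0 else E e k l * E e l k\<bar>)" by (rule sum_abs)
    also have "\<dots> \<le> (\<Sum>k<N. \<Sum>l<N. \<bar>if k = i \<and> l = i then 0 else E e k l * E e l k\<bar>)"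
      by (intro sum_mono sum_abs)
    also have "\<dots> \<le> (\<Sum>k<N. \<Sum>l<N. K / e)"
    proof (intro sum_mono)
      fix k l assume "k \<in> {..<N}" "l \<in> {..<N}"
      thus "\<bar>if k = i \<and> l = i then 0 else E e k l * E e l k\<bar> \<le> K / e"
        using bP[OF e, of k l] Knn e by auto
    qed
    also have "\<dots> = real N * real N * K / e" by simp
    finally show ?thesis unfolding Tdec by linarith
  qed
  define A where "A e = (G1 ((dp * h + e) / e) - G1 ((dm * h + e) / e))" for e
  have lim0: "filterlim (\<lambda>e. (A e)^2 - (h^2 * (real N * real N * K)) / e) at_top (at_right 0)"
    unfolding A_def using assms(2,4,5,6) Knn
    by (intro key_limit) (auto simp: mult_right_cancel)
  have lim1: "filterlim (\<lambda>e. (1 / h^2) * ((A e)^2 - (h^2 * (real N * real N * K)) / e)) at_top (at_right 0)"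
    by (rule filterlim_tendsto_pos_mult_at_top[OF tendsto_const _ lim0]) (use h in simp)
  have ev01: "eventually (\<lambda>x. x \<in> {0<..<1}) (at_right (0::real))"
    by (rule eventually_at_right_real) simp
  have P1: "filterlim (\<lambda>e. \<bar>T e\<bar>) at_top (at_right 0)"
  proof (rule filterlim_at_top_mono[OF lim1])
    show "eventually (\<lambda>e. (1 / h^2) * ((A e)^2 - (h^2 * (real N * real N * K)) / e) \<le> \<bar>T e\<bar>) (at_right 0)"
      using ev01
    proof eventually_elim
      case (elim e)
      hence e: "0 < e" "e \<le> 1" by auto
      have "(1 / h^2) * ((A e)^2 - (h^2 * (real N * real N * K)) / e) = (E e i i)^2 - real N * real N * K / e"
        using h e unfolding Eii[OF e(1)] A_def by (simp add: field_simps power2_eq_square)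
      also have "\<dots> \<le> T e" by (rule Tlow[OF e])
      finally show ?case by simp
    qed
  qed
  have P2: "spectral_radius (map_mat complex_of_real (jac N h (?u e))) \<ge> sqrt (\<bar>T e\<bar> / real N)" if e: "e > 0" for e
  proof -
    let ?J = "jac N h (?u e)"
    let ?A = "map_mat complex_of_real ?J"
    have Jc: "?J \<in> carrier_mat N N" by (simp add: jac_def)
    have Ac: "?A \<in> carrier_mat N N" using Jc by simp
    have Npos: "N > 0" using N by simp
    have "?A * ?A = map_mat complex_of_real (?J * ?J)"
      using of_real_hom.mat_hom_mult[OF Jc Jc] by (rule sym)
    hence tr: "mat_trace (?A * ?A) = complex_of_real (T e)"
      unfolding T_def mat_trace_def using Jc by (simp add: of_real_sum)
    have "\<bar>T e\<bar> \<le> real N * (spectral_radius ?A)^2"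
      using sr_trace[OF Ac Npos] unfolding tr by simp
    hence "\<bar>T e\<bar> / real N \<le> (spectral_radius ?A)^2" using Npos by (simp add: divide_le_eq mult.commute)
    hence "sqrt (\<bar>T e\<bar> / real N) \<le> sqrt ((spectral_radius ?A)^2)" by (rule real_sqrt_le_mono)
    moreover have "spectral_radius ?A \<ge> 0"
      using spectral_radius_mem_max(1)[OF Ac Npos] by auto
    ultimately show ?thesis by simp
  qed
  have lim2: "filterlim (\<lambda>e. sqrt ((1 / real N) * \<bar>T e\<bar>)) at_top (at_right 0)"
    by (rule filterlim_compose[OF sqrt_at_top filterlim_tendsto_pos_mult_at_top[OF tendsto_const _ P1]])
       (use N in simp)
  have P3: "filterlim (\<lambda>e. spectral_radius (map_mat complex_of_real (jac N h (?u e)))) at_top (at_right 0)"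
  proof (rule filterlim_at_top_mono[OF lim2])
    show "eventually (\<lambda>e. sqrt ((1 / real N) * \<bar>T e\<bar>) \<le> spectral_radius (map_mat complex_of_real (jac N h (?u e)))) (at_right 0)"
      using eventually_at_right_less[of "0::real"]
    proof eventually_elim
      case (elim e)
      thus ?case using P2[OF elim] by simp
    qed
  qed
  show ?thesis using P1 P2 P3 unfolding T_def by auto
qed

end
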